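(* In the setting below: (i) $(e_j)$ is a normalized monotone basis of $Z$; (ii) if $(u_j)$ is boundedly complete, then so is $(e_j)$; (iii) for every $\sum_ia_ie_i\in Z$ the series $\sum_ia_ix_i$ converges in $X$, and the map $Q:Z\to X$, $Q(\sum_ja_je_j)=\sum_ja_jx_j$, is a quotient map with $\|Q\|\le1$ such that $B_X\subseteq Q((1+\varepsilon)B_Z)$ for every $\varepsilon>0$.
   Context: Setting: $X$ is a separable Banach space, $(x_n)$ a sequence in $S_X$ such that $\{\pm x_n\}$ is dense in $S_X$; $U$ is a Banach space with a normalized $1$-unconditional basis $(u_n)$. For finite $I,J\subseteq\mathbb N$, $I<J$ means $\max I<\min J$. On $c_{00}$ with unit vectors $(e_i)$ define, for $a=\sum_ia_ie_i$, $$\|a\|_Z=\max\left\{\left\|\sum_{j=1}^k\Big\|\sum_{i\in I_j}a_ix_i\Big\|_Xu_{\min I_j}\right\|_U: k\in\mathbb N,\ I_1<\dots<I_k\text{ intervals in }\mathbb N\right\},$$ and let $Z$ be the completion of $c_{00}$ under this norm. *)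

theory Defs
  imports "HOL-Analysis.Analysis"
begin

definition schauder_basis :: "(nat \<Rightarrow> 'a::real_normed_vector) \<Rightarrow> bool" where
  "schauder_basis b \<longleftrightarrow> (\<forall>y. \<exists>!c. (\<lambda>n. c n *\<^sub>R b n) sums y)"

definition normalized :: "(nat \<Rightarrow> 'a::real_normed_vector) \<Rightarrow> bool" where
  "normalized b \<longleftrightarrow> (\<forall>n. norm (b n) = 1)"

text \<open>Monotone basis: basis constant 1, i.e. the partial sum projections have norm at most 1.\<close>
definition monotone_basis :: "(nat \<Rightarrow> 'a::real_normed_vector) \<Rightarrow> bool" where
  "monotone_basis b \<longleftrightarrow> schauder_basis b \<and>
     (\<forall>a m n. m \<le> n \<longrightarrow> norm (\<Sum>i<m. a i *\<^sub>R b i) \<le> norm (\<Sum>i<n. a i *\<^sub>R b i))"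

definition one_unconditional_basis :: "(nat \<Rightarrow> 'a::real_normed_vector) \<Rightarrow> bool" where
  "one_unconditional_basis b \<longleftrightarrow> schauder_basis b \<and>
     (\<forall>a s N. (\<forall>i. s i = 1 \<or> s i = -1) \<longrightarrow>
        norm (\<Sum>i<N. (s i * a i) *\<^sub>R b i) = norm (\<Sum>i<N. a i *\<^sub>R b i))"

definition boundedly_complete :: "(nat \<Rightarrow> 'a::real_normed_vector) \<Rightarrow> bool" where
  "boundedly_complete b \<longleftrightarrow>
     (\<forall>a. bounded (range (\<lambda>n. \<Sum>i<n. a i *\<^sub>R b i)) \<longrightarrow> summable (\<lambda>i. a i *\<^sub>R b i))"

text \<open>A list of pairs (m_j, n_j) encodes intervals I_j = {m_j..n_j} with I_1 < ... < I_k.\<close>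
definition interval_list :: "(nat \<times> nat) list \<Rightarrow> bool" where
  "interval_list Is \<longleftrightarrow> (\<forall>j<length Is. fst (Is!j) \<le> snd (Is!j)) \<and>
     (\<forall>j. Suc j < length Is \<longrightarrow> snd (Is!j) < fst (Is!Suc j))"

text \<open>The norm of Z on finitely supported scalar sequences a.\<close>
definition Znorm :: "(nat \<Rightarrow> 'x::real_normed_vector) \<Rightarrow> (nat \<Rightarrow> 'u::real_normed_vector)
    \<Rightarrow> (nat \<Rightarrow> real) \<Rightarrow> real" where
  "Znorm x u a = Sup {norm (\<Sum>j<length Is.
       norm (\<Sum>i\<in>{fst (Is!j)..snd (Is!j)}. a i *\<^sub>R x i) *\<^sub>R u (fst (Is!j))) | Is. interval_list Is}"

end

theory Submission
  imports Defs
begin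

definition Fv :: "(nat \<Rightarrow> 'x::real_normed_vector) \<Rightarrow> (nat \<Rightarrow> 'u::real_normed_vector) \<Rightarrow> (nat \<Rightarrow> real) \<Rightarrow> nat \<times> nat \<Rightarrow> 'u" where
  "Fv x u a p = norm (\<Sum>i\<in>{fst p..snd p}. a i *\<^sub>R x i) *\<^sub>R u (fst p)"

definition Gv :: "(nat \<Rightarrow> 'x::real_normed_vector) \<Rightarrow> (nat \<Rightarrow> 'u::real_normed_vector) \<Rightarrow> (nat \<Rightarrow> real) \<Rightarrow> (nat \<times> nat) list \<Rightarrow> real" where
  "Gv x u a Is = norm (sum_list (map (Fv x u a) Is))"

definition ilist :: "(nat \<times> nat) list \<Rightarrow> bool" where
  "ilist Is \<longleftrightarrow> (\<forall>p\<in>set Is. fst p \<le> snd p) \<and> sorted_wrt (\<lambda>p q. snd p < fst q) Is"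

lemma sum_list_map_nth: "sum_list (map f xs) = (\<Sum>j<length xs. f (xs!j))"
  by (simp add: sum_list_sum_nth atLeast0LessThan)

lemma Znorm_alt: "Znorm x u a = Sup {Gv x u a Is | Is. interval_list Is}"
  unfolding Znorm_def Gv_def Fv_def sum_list_map_nth by simp

lemma il_chain:
  assumes "interval_list Is" "j < k" "k < length Is"
  shows "snd (Is!j) < fst (Is!k)"
  using assms(2,3)
proof (induction k)
  case 0 then show ?case by simp
next
  case (Suc k)
  show ?case
  proof (cases "j = k")
    case True then show ?thesis using assms(1) Suc.prems unfolding interval_list_def by auto
  next
    case False
    then have "snd (Is!j) < fst (Is!k)" using Suc by auto
    moreover have "fst (Is!k) \<le> snd (Is!k)" using assms(1) Suc.prems unfolding interval_list_def by auto
    moreover have "snd (Is!k) < fst (Is!Suc k)" using assms(1) Suc.prems unfolding interval_list_def by auto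
    ultimately show ?thesis by linarith
  qed
qed

lemma il_iff: "interval_list Is \<longleftrightarrow> ilist Is"
proof
  assume a: "interval_list Is"
  have "\<forall>p\<in>set Is. fst p \<le> snd p" using a unfolding interval_list_def by (metis in_set_conv_nth)
  then show "ilist Is" unfolding ilist_def sorted_wrt_iff_nth_less
    using il_chain[OF a] by auto
next
  assume "ilist Is"
  then show "interval_list Is" unfolding ilist_def interval_list_def sorted_wrt_iff_nth_less
    by auto
qed

lemma Znorm_alt2: "Znorm x u a = Sup {Gv x u a Is | Is. ilist Is}"
  unfolding Znorm_alt il_iff ..

lemma ilist_fst_ge: "ilist Is \<Longrightarrow> j < length Is \<Longrightarrow> j \<le> fst (Is!j)"
proof (induction j)
  case 0 then show ?case by simp
next
  case (Suc j)
  have "fst (Is!j) \<le> snd (Is!j)" using Suc.prems unfolding ilist_def by auto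
  moreover have "snd (Is!j) < fst (Is!Suc j)" using Suc.prems unfolding ilist_def sorted_wrt_iff_nth_less by auto
  ultimately show ?case using Suc by auto
qed

lemma Fv_norm_le:
  assumes "\<forall>n. norm (x n) = 1" "\<forall>n. norm (u n) = 1"
  shows "norm (Fv x u a p) \<le> (\<Sum>i\<in>{fst p..snd p}. \<bar>a i\<bar>)"
proof -
  have "norm (Fv x u a p) = norm (\<Sum>i\<in>{fst p..snd p}. a i *\<^sub>R x i)"
    unfolding Fv_def using assms by simp
  also have "\<dots> \<le> (\<Sum>i\<in>{fst p..snd p}. norm (a i *\<^sub>R x i))" by (rule norm_sum)
  also have "\<dots> = (\<Sum>i\<in>{fst p..snd p}. \<bar>a i\<bar>)" using assms by simp
  finally show ?thesis .
qed

lemma Gv_bound: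
  assumes "\<forall>n. norm (x n) = 1" "\<forall>n. norm (u n) = 1" "\<forall>i\<ge>N. a i = 0" "ilist Is"
  shows "Gv x u a Is \<le> real N * (\<Sum>i<N. \<bar>a i\<bar>)"
proof -
  define S where "S = (\<Sum>i<N. \<bar>a i\<bar>)"
  have S0: "S \<ge> 0" unfolding S_def by (simp add: sum_nonneg)
  have b: "norm (Fv x u a (Is!j)) \<le> (if j < N then S else 0)" if j: "j < length Is" for j
  proof -
    let ?p = "Is!j"
    have "norm (Fv x u a ?p) \<le> (\<Sum>i\<in>{fst ?p..snd ?p}. \<bar>a i\<bar>)" by (rule Fv_norm_le[OF assms(1,2)])
    also have "\<dots> = (\<Sum>i\<in>{fst ?p..snd ?p} \<inter> {..<N}. \<bar>a i\<bar>)"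
      by (rule sum.mono_neutral_right) (use assms(3) in \<open>auto simp: not_less[symmetric]\<close>)
    also have "\<dots> \<le> (if j < N then S else 0)"
    proof (cases "j < N")
      case True
      have "(\<Sum>i\<in>{fst ?p..snd ?p} \<inter> {..<N}. \<bar>a i\<bar>) \<le> S"
        unfolding S_def by (rule sum_mono2) auto
      then show ?thesis using True by simp
    next
      case False
      then have "{fst ?p..snd ?p} \<inter> {..<N} = {}" using ilist_fst_ge[OF assms(4) j] by auto
      then show ?thesis using False by simp
    qed
    finally show ?thesis .
  qed
  have "Gv x u a Is \<le> (\<Sum>j<length Is. norm (Fv x u a (Is!j)))"
    unfolding Gv_def sum_list_map_nth by (rule norm_sum)
  also have "\<dots> \<le> (\<Sum>j<length Is. if j < N then S else 0)" by (rule sum_mono) (use b in auto)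
  also have "\<dots> = (\<Sum>j\<in>{..<length Is} \<inter> {..<N}. S)"
    by (simp add: sum.If_cases lessThan_def)
  also have "\<dots> \<le> (\<Sum>j\<in>{..<N}. S)" by (rule sum_mono2) (use S0 in auto)
  finally show ?thesis by (simp add: S_def)
qed

lemma Z_bdd:
  assumes "\<forall>n. norm (x n) = 1" "\<forall>n. norm (u n) = 1" "\<forall>i\<ge>N. a i = 0"
  shows "bdd_above {Gv x u a Is | Is. ilist Is}"
  using Gv_bound[OF assms] by (auto intro!: bdd_aboveI)

lemma Z_upper:
  assumes "\<forall>n. norm (x n) = 1" "\<forall>n. norm (u n) = 1" "\<forall>i\<ge>N. a i = 0" "ilist Is"
  shows "Gv x u a Is \<le> Znorm x u a"
  unfolding Znorm_alt2 by (rule cSup_upper) (use assms(4) Z_bdd[OF assms(1-3)] in auto)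

lemma Z_least:
  assumes "\<And>Is. ilist Is \<Longrightarrow> Gv x u a Is \<le> B"
  shows "Znorm x u a \<le> B"
proof -
  have ne: "{Gv x u a Is | Is. ilist Is} \<noteq> {}" by (auto simp: ilist_def intro!: exI[of _ "[]"])
  show ?thesis unfolding Znorm_alt2 by (rule cSup_least[OF ne]) (use assms in auto)
qed

lemma Z_approx:
  assumes "\<forall>n. norm (x n) = 1" "\<forall>n. norm (u n) = 1" "\<forall>i\<ge>N. a i = 0" "t < Znorm x u a"
  shows "\<exists>Is. ilist Is \<and> t < Gv x u a Is"
proof -
  have ne: "{Gv x u a Is | Is. ilist Is} \<noteq> {}" by (auto simp: ilist_def intro!: exI[of _ "[]"])
  from assms(4) have "t < Sup {Gv x u a Is | Is. ilist Is}" unfolding Znorm_alt2 .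
  then show ?thesis using less_cSup_iff[OF ne Z_bdd[OF assms(1-3)]] by auto
qed

lemma Fv_cong: "(\<And>i. fst p \<le> i \<Longrightarrow> i \<le> snd p \<Longrightarrow> a i = b i) \<Longrightarrow> Fv x u a p = Fv x u b p"
  unfolding Fv_def by (metis (no_types, lifting) atLeastAtMost_iff sum.cong)

lemma Fv_zero: "(\<And>i. fst p \<le> i \<Longrightarrow> i \<le> snd p \<Longrightarrow> a i = 0) \<Longrightarrow> Fv x u a p = 0"
  unfolding Fv_def by (simp add: sum.neutral)

lemma ilist_filter: "ilist Is \<Longrightarrow> ilist (filter P Is)"
  unfolding ilist_def by (auto intro: sorted_wrt_filter)

lemma right_clip:
  assumes a: "\<forall>i\<ge>n. a i = 0" and il: "ilist Is"
  shows "\<exists>Js. ilist Js \<and> (\<forall>p\<in>set Js. snd p < n \<and> (\<exists>q\<in>set Is. fst q = fst p)) \<and> Gv x u a Js = Gv x u a Is"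
proof -
  define c where "c p = (fst p, min (snd p) (n - 1))" for p :: "nat \<times> nat"
  define Js where "Js = map c (filter (\<lambda>p. fst p < n) Is)"
  have 1: "ilist Js"
  proof -
    have "sorted_wrt (\<lambda>p q. snd p < fst q) (filter (\<lambda>p. fst p < n) Is)"
      using il unfolding ilist_def by (auto intro: sorted_wrt_filter)
    then have "sorted_wrt (\<lambda>p q. snd (c p) < fst (c q)) (filter (\<lambda>p. fst p < n) Is)"
      by (rule sorted_wrt_mono_rel[rotated]) (auto simp: c_def)
    then show ?thesis using il unfolding ilist_def Js_def sorted_wrt_map by (auto simp: c_def)
  qed
  have 2: "\<forall>p\<in>set Js. snd p < n \<and> (\<exists>q\<in>set Is. fst q = fst p)"
    unfolding Js_def c_def by force
  have "sum_list (map (Fv x u a) Js) = sum_list (map (\<lambda>p. Fv x u a (c p)) (filter (\<lambda>p. fst p < n) Is))"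
    unfolding Js_def by (simp add: comp_def)
  also have "\<dots> = sum_list (map (Fv x u a) (filter (\<lambda>p. fst p < n) Is))"
  proof (rule arg_cong[where f=sum_list], rule map_cong[OF refl])
    fix p assume "p \<in> set (filter (\<lambda>p. fst p < n) Is)"
    then have "fst p < n" by simp
    have "(\<Sum>i\<in>{fst p..min (snd p) (n-1)}. a i *\<^sub>R x i) = (\<Sum>i\<in>{fst p..snd p}. a i *\<^sub>R x i)"
      by (rule sum.mono_neutral_left) (use a in auto)
    then show "Fv x u a (c p) = Fv x u a p" unfolding Fv_def c_def by simp
  qed
  also have "\<dots> = sum_list (map (Fv x u a) Is)"
    by (rule sum_list_map_filter) (use a in \<open>auto intro!: Fv_zero\<close>)
  finally show ?thesis using 1 2 unfolding Gv_def by (intro exI[of _ Js]) auto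
qed

lemma left_filter:
  assumes a: "\<forall>i<m. a i = 0"
  shows "Gv x u a (filter (\<lambda>p. m \<le> snd p) Is) = Gv x u a Is"
  unfolding Gv_def by (subst sum_list_map_filter) (use a in \<open>auto intro!: Fv_zero\<close>)

lemma inner_block:
  assumes xn: "\<forall>n. norm (x n) = 1" and un: "\<forall>n. norm (u n) = 1"
    and b: "\<forall>i. (i < m \<or> n \<le> i) \<longrightarrow> b i = 0" and il: "ilist Is"
  shows "\<exists>Js. ilist Js \<and> (\<forall>p\<in>set Js. m \<le> fst p \<and> snd p < n) \<and> Gv x u b Is \<le> 2 * Gv x u b Js"
proof -
  obtain Is1 where Is1: "ilist Is1" "\<forall>p\<in>set Is1. snd p < n" "Gv x u b Is1 = Gv x u b Is"
    using right_clip[of n b Is x u] b il by auto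
  define Is2 where "Is2 = filter (\<lambda>p. m \<le> snd p) Is1"
  have Is2: "ilist Is2" "Gv x u b Is2 = Gv x u b Is" "\<forall>p\<in>set Is2. m \<le> snd p \<and> snd p < n"
    using ilist_filter[OF Is1(1)] left_filter[of m b x u Is1] Is1 b unfolding Is2_def by auto
  show ?thesis
  proof (cases Is2)
    case Nil
    then show ?thesis using Is2 by (intro exI[of _ "[]"]) (auto simp: ilist_def Gv_def)
  next
    case (Cons p0 rest)
    have ilr: "ilist rest" using Is2(1) Cons unfolding ilist_def by auto
    have rin: "\<forall>p\<in>set rest. m \<le> fst p \<and> snd p < n"
    proof
      fix q assume q: "q \<in> set rest"
      then have "snd p0 < fst q" using Is2(1) Cons unfolding ilist_def by auto
      moreover have "m \<le> snd p0" using Is2(3) Cons by auto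
      ultimately show "m \<le> fst q \<and> snd q < n" using Is2(3) Cons q by auto
    qed
    define p1 where "p1 = (max m (fst p0), snd p0)"
    have p0: "fst p0 \<le> snd p0" "m \<le> snd p0" "snd p0 < n" using Is2 Cons unfolding ilist_def by auto
    have ilp: "ilist [p1]" using p0 unfolding ilist_def p1_def by auto
    have p1in: "\<forall>p\<in>set [p1]. m \<le> fst p \<and> snd p < n" using p0 unfolding p1_def by auto
    have "(\<Sum>i\<in>{fst p1..snd p1}. b i *\<^sub>R x i) = (\<Sum>i\<in>{fst p0..snd p0}. b i *\<^sub>R x i)"
      unfolding p1_def by (rule sum.mono_neutral_left) (use b in auto)
    then have np: "norm (Fv x u b p0) = Gv x u b [p1]"
      unfolding Gv_def Fv_def using un by simp
    have "Gv x u b Is = norm (Fv x u b p0 + sum_list (map (Fv x u b) rest))"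
      using Is2(2) Cons by (simp add: Gv_def)
    also have "\<dots> \<le> Gv x u b [p1] + Gv x u b rest"
      using norm_triangle_ineq np unfolding Gv_def by (metis (no_types, lifting))
    finally have le: "Gv x u b Is \<le> Gv x u b [p1] + Gv x u b rest" .
    show ?thesis
    proof (cases "Gv x u b rest \<le> Gv x u b [p1]")
      case True then show ?thesis using le ilp p1in by (intro exI[of _ "[p1]"]) auto
    next
      case False then show ?thesis using le ilr rin by (intro exI[of _ rest]) auto
    qed
  qed
qed

lemma dL_sum:
  fixes c :: "nat \<times> nat \<Rightarrow> real" and u :: "nat \<Rightarrow> 'u::real_normed_vector"
  assumes "\<forall>p\<in>set L. fst p < N"
  shows "(\<Sum>i<N. (sum_list (map (\<lambda>p. if fst p = i then c p else 0) L)) *\<^sub>R u i)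
     = sum_list (map (\<lambda>p. c p *\<^sub>R u (fst p)) L)"
  using assms
proof (induction L)
  case Nil then show ?case by simp
next
  case (Cons p L)
  let ?g = "\<lambda>i. sum_list (map (\<lambda>p. if fst p = i then c p else 0) L)"
  have "(\<Sum>i<N. (sum_list (map (\<lambda>p. if fst p = i then c p else 0) (p # L))) *\<^sub>R u i)
     = (\<Sum>i<N. (if fst p = i then c p else 0) *\<^sub>R u i + ?g i *\<^sub>R u i)"
    by (simp add: scaleR_add_left)
  also have "\<dots> = (\<Sum>i<N. (if fst p = i then c p else 0) *\<^sub>R u i) + (\<Sum>i<N. ?g i *\<^sub>R u i)"
    by (rule sum.distrib)
  also have "(\<Sum>i<N. (if fst p = i then c p else 0) *\<^sub>R u i) = (\<Sum>i<N. if fst p = i then c p *\<^sub>R u i else 0)"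
    by (rule sum.cong) auto
  also have "\<dots> = c p *\<^sub>R u (fst p)"
    using Cons.prems by (simp add: sum.delta)
  finally show ?case using Cons by simp
qed

lemma dL_zero:
  "\<forall>p\<in>set L. fst p \<noteq> i \<Longrightarrow> sum_list (map (\<lambda>p. if fst p = i then (c p::real) else 0) L) = 0"
  by (induction L) auto

locale ctx =
  fixes x :: "nat \<Rightarrow> 'x::banach" and u :: "nat \<Rightarrow> 'u::banach" and e :: "nat \<Rightarrow> 'z::banach"
  assumes x_sphere: "\<forall>n. norm (x n) = 1"
    and x_dense: "sphere 0 1 \<subseteq> closure (range x \<union> range (\<lambda>n. - x n))"
    and u_norm: "normalized u"
    and u_unc: "one_unconditional_basis u"
    and e_norm: "\<forall>a N. (\<forall>i\<ge>N. a i = 0) \<longrightarrow> norm (\<Sum>i<N. a i *\<^sub>R e i) = Znorm x u a"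
    and e_dense: "closure (span (range e)) = UNIV"
begin

lemma un1: "\<forall>n. norm (u n) = 1" using u_norm unfolding normalized_def .

lemma trunc: "norm (\<Sum>i<N. a i *\<^sub>R e i) = Znorm x u (\<lambda>i. if i < N then a i else 0)"
proof -
  have "(\<Sum>i<N. a i *\<^sub>R e i) = (\<Sum>i<N. (if i < N then a i else 0) *\<^sub>R e i)" by simp
  then show ?thesis using e_norm[rule_format, of N "\<lambda>i. if i < N then a i else 0"] by simp
qed

lemma blk: "norm (\<Sum>i\<in>{m..<n}. a i *\<^sub>R e i) = Znorm x u (\<lambda>i. if m \<le> i \<and> i < n then a i else 0)"
proof -
  have "(\<Sum>i\<in>{m..<n}. a i *\<^sub>R e i) = (\<Sum>i<n. (if m \<le> i \<and> i < n then a i else 0) *\<^sub>R e i)"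
    by (rule sum.mono_neutral_cong_left) auto
  then show ?thesis using e_norm[rule_format, of n "\<lambda>i. if m \<le> i \<and> i < n then a i else 0"] by simp
qed

lemma Zup: "\<forall>i\<ge>N. a i = 0 \<Longrightarrow> ilist Is \<Longrightarrow> Gv x u a Is \<le> Znorm x u a"
  using Z_upper[OF x_sphere un1] by blast

lemma Zapprox: "\<forall>i\<ge>N. a i = 0 \<Longrightarrow> t < Znorm x u a \<Longrightarrow> \<exists>Is. ilist Is \<and> t < Gv x u a Is"
  using Z_approx[OF x_sphere un1] by blast

lemma mono_e:
  assumes "m \<le> N"
  shows "norm (\<Sum>i<m. a i *\<^sub>R e i) \<le> norm (\<Sum>i<N. a i *\<^sub>R e i)"
proof -
  define am where "am = (\<lambda>i. if i < m then a i else 0)"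
  define aN where "aN = (\<lambda>i. if i < N then a i else 0)"
  have "Znorm x u am \<le> Znorm x u aN"
  proof (rule Z_least)
    fix Is assume il: "ilist Is"
    obtain Js where Js: "ilist Js" "\<forall>p\<in>set Js. snd p < m" "Gv x u am Js = Gv x u am Is"
      using right_clip[of m am Is x u] il unfolding am_def by auto
    have "sum_list (map (Fv x u am) Js) = sum_list (map (Fv x u aN) Js)"
      by (rule arg_cong[where f=sum_list], rule map_cong[OF refl], rule Fv_cong)
         (use Js(2) assms in \<open>fastforce simp: am_def aN_def\<close>)
    then have "Gv x u am Is = Gv x u aN Js" using Js(3) by (simp add: Gv_def)
    also have "\<dots> \<le> Znorm x u aN" by (rule Zup[of N, OF _ Js(1)]) (auto simp: aN_def)
    finally show "Gv x u am Is \<le> Znorm x u aN" .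
  qed
  then show ?thesis unfolding trunc am_def aN_def .
qed

lemma e_norm1: "norm (e n) = 1"
proof -
  define d where "d = (\<lambda>i. if i = n then 1 else (0::real))"
  have "(\<Sum>i<Suc n. d i *\<^sub>R e i) = e n" unfolding d_def
    by (simp add: if_distrib cong: if_cong)
  moreover have "norm (\<Sum>i<Suc n. d i *\<^sub>R e i) = Znorm x u d"
    by (rule e_norm[rule_format]) (auto simp: d_def)
  moreover have "Znorm x u d \<le> 1"
  proof (rule Z_least)
    fix Is assume il: "ilist Is"
    have f: "norm (Fv x u d p) = (if fst p \<le> n \<and> n \<le> snd p then 1 else 0)" for p
    proof -
      have "(\<Sum>i\<in>{fst p..snd p}. d i *\<^sub>R x i) = (\<Sum>i\<in>{fst p..snd p}. if i = n then x n else 0)"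
        by (rule sum.cong) (auto simp: d_def)
      also have "\<dots> = (if fst p \<le> n \<and> n \<le> snd p then x n else 0)"
        by (simp add: sum.delta)
      finally have "(\<Sum>i\<in>{fst p..snd p}. d i *\<^sub>R x i) = (if fst p \<le> n \<and> n \<le> snd p then x n else 0)" .
      then show ?thesis unfolding Fv_def using x_sphere un1 by auto
    qed
    let ?J = "{j. j < length Is \<and> fst (Is!j) \<le> n \<and> n \<le> snd (Is!j)}"
    have cardJ: "card ?J \<le> 1"
    proof -
      have "j1 = j2" if "j1 \<in> ?J" "j2 \<in> ?J" for j1 j2
      proof (rule ccontr)
        assume ne: "j1 \<noteq> j2"
        have ch: "snd (Is!j) < fst (Is!k)" if "j < k" "k < length Is" for j k
          using il that unfolding ilist_def sorted_wrt_iff_nth_less by auto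
        show False
        proof (cases "j1 < j2")
          case True then show ?thesis using ch[of j1 j2] that by auto
        next
          case False then show ?thesis using ch[of j2 j1] that ne by auto
        qed
      qed
      then have "\<forall>a1\<in>?J. \<forall>a2\<in>?J. a1 = a2" by blast
      moreover have fin: "finite ?J" by auto
      ultimately have "card ?J \<le> Suc 0" using card_le_Suc0_iff_eq[OF fin] by blast
      then show ?thesis by simp
    qed
    have "Gv x u d Is \<le> (\<Sum>j<length Is. norm (Fv x u d (Is!j)))"
      unfolding Gv_def sum_list_map_nth by (rule norm_sum)
    also have "\<dots> = (\<Sum>j<length Is. if fst (Is!j) \<le> n \<and> n \<le> snd (Is!j) then 1 else 0)"
      using f by simp
    also have "\<dots> = real (card ?J)"
      by (simp add: sum.If_cases lessThan_def Collect_conj_eq Int_commute)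
    finally show "Gv x u d Is \<le> 1" using cardJ by linarith
  qed
  moreover have "1 \<le> Znorm x u d"
  proof -
    have "Gv x u d [(n,n)] = 1" unfolding Gv_def Fv_def d_def using x_sphere un1 by simp
    moreover have "Gv x u d [(n,n)] \<le> Znorm x u d"
      by (rule Zup[of "Suc n"]) (auto simp: d_def ilist_def)
    ultimately show ?thesis by simp
  qed
  ultimately show ?thesis by simp
qed


lemma pad: "\<forall>i\<ge>N. a i = 0 \<Longrightarrow> N \<le> K \<Longrightarrow> (\<Sum>i<K. a i *\<^sub>R e i) = (\<Sum>i<N. a i *\<^sub>R e i)"
  by (rule sum.mono_neutral_right) auto

definition Rep :: "'z set" where
  "Rep = {w. \<exists>a N. (\<forall>i\<ge>N. a i = 0) \<and> w = (\<Sum>i<N. a i *\<^sub>R e i)}"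

lemma span_rep: "span (range e) \<subseteq> Rep"
proof (rule span_minimal)
  show "range e \<subseteq> Rep"
  proof
    fix w assume "w \<in> range e"
    then obtain n where w: "w = e n" by auto
    define d where "d = (\<lambda>i. if i = n then 1 else (0::real))"
    have "(\<Sum>i<Suc n. d i *\<^sub>R e i) = e n" unfolding d_def
      by (simp add: if_distrib cong: if_cong)
    then show "w \<in> Rep" unfolding Rep_def w by (intro CollectI exI[of _ d] exI[of _ "Suc n"]) (auto simp: d_def)
  qed
  show "subspace Rep" unfolding subspace_def
  proof (intro conjI ballI allI)
    show "0 \<in> Rep" unfolding Rep_def by (intro CollectI exI[of _ "\<lambda>i. 0"] exI[of _ 0]) auto
  next
    fix v w assume "v \<in> Rep" "w \<in> Rep"
    then obtain a N b M where ab: "\<forall>i\<ge>N. a i = 0" "v = (\<Sum>i<N. a i *\<^sub>R e i)"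
      "\<forall>i\<ge>M. b i = 0" "w = (\<Sum>i<M. b i *\<^sub>R e i)" unfolding Rep_def by auto
    let ?K = "max N M"
    have "v + w = (\<Sum>i<?K. (a i + b i) *\<^sub>R e i)"
      using pad[OF ab(1), of ?K] pad[OF ab(3), of ?K] ab by (simp add: scaleR_add_left sum.distrib)
    then show "v + w \<in> Rep" unfolding Rep_def using ab
      by (intro CollectI exI[of _ "\<lambda>i. a i + b i"] exI[of _ ?K]) auto
  next
    fix c :: real and v assume "v \<in> Rep"
    then obtain a N where ab: "\<forall>i\<ge>N. a i = 0" "v = (\<Sum>i<N. a i *\<^sub>R e i)" unfolding Rep_def by auto
    have "c *\<^sub>R v = (\<Sum>i<N. (c * a i) *\<^sub>R e i)" using ab by (simp add: scaleR_sum_right)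
    then show "c *\<^sub>R v \<in> Rep" unfolding Rep_def using ab
      by (intro CollectI exI[of _ "\<lambda>i. c * a i"] exI[of _ N]) auto
  qed
qed

lemma part_bd: "\<forall>i\<ge>N. c i = 0 \<Longrightarrow> norm (\<Sum>i<n. c i *\<^sub>R e i) \<le> norm (\<Sum>i<N. c i *\<^sub>R e i)"
  using mono_e[of n "max n N" c] pad[of N c "max n N"] by auto

lemma coef_bd: "\<forall>i\<ge>N. c i = 0 \<Longrightarrow> \<bar>c n\<bar> \<le> 2 * norm (\<Sum>i<N. c i *\<^sub>R e i)"
proof -
  assume c: "\<forall>i\<ge>N. c i = 0"
  have "\<bar>c n\<bar> = norm (c n *\<^sub>R e n)" using e_norm1 by simp
  also have "c n *\<^sub>R e n = (\<Sum>i<Suc n. c i *\<^sub>R e i) - (\<Sum>i<n. c i *\<^sub>R e i)" by simp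
  also have "norm \<dots> \<le> norm (\<Sum>i<Suc n. c i *\<^sub>R e i) + norm (\<Sum>i<n. c i *\<^sub>R e i)"
    by (rule norm_triangle_ineq4)
  also have "\<dots> \<le> 2 * norm (\<Sum>i<N. c i *\<^sub>R e i)"
    using part_bd[OF c, of n] part_bd[OF c, of "Suc n"] by linarith
  finally show ?thesis .
qed

lemma exist_exp: "\<exists>c. (\<lambda>n. c n *\<^sub>R e n) sums y"
proof -
  have "y \<in> closure (span (range e))" using e_dense by simp
  then obtain w where w: "\<forall>k. w k \<in> span (range e)" "w \<longlonglongrightarrow> y"
    unfolding closure_sequential by blast
  have "\<forall>k. \<exists>a N. (\<forall>i\<ge>N. a i = 0) \<and> w k = (\<Sum>i<N. a i *\<^sub>R e i)"
    using w(1) span_rep unfolding Rep_def by blast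
  then obtain A NN where A: "\<And>k. \<forall>i\<ge>NN k. A k i = 0" "\<And>k. w k = (\<Sum>i<NN k. A k i *\<^sub>R e i)"
    by metis
  have diff: "w k - w l = (\<Sum>i<max (NN k) (NN l). (A k i - A l i) *\<^sub>R e i)"
    "\<forall>i\<ge>max (NN k) (NN l). A k i - A l i = 0" for k l
    using pad[OF A(1)[of k], of "max (NN k) (NN l)"] pad[OF A(1)[of l], of "max (NN k) (NN l)"] A
    by (auto simp: scaleR_diff_left sum_subtractf)
  have cb: "\<bar>A k i - A l i\<bar> \<le> 2 * norm (w k - w l)" for k l i
    using coef_bd[OF diff(2)[of k l], of i] diff(1)[of k l] by simp
  have pb: "norm ((\<Sum>i<n. A k i *\<^sub>R e i) - (\<Sum>i<n. A l i *\<^sub>R e i)) \<le> norm (w k - w l)" for k l n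
    using part_bd[OF diff(2)[of k l], of n] diff(1)[of k l] by (simp add: scaleR_diff_left sum_subtractf)
  have cw: "Cauchy w" using w(2) by (rule LIMSEQ_imp_Cauchy)
  have "Cauchy (\<lambda>k. A k i)" for i
  proof (rule metric_CauchyI)
    fix r :: real assume "r > 0"
    then obtain M where M: "\<forall>m\<ge>M. \<forall>n\<ge>M. dist (w m) (w n) < r / 2"
      using metric_CauchyD[OF cw, of "r/2"] by auto
    show "\<exists>M. \<forall>m\<ge>M. \<forall>n\<ge>M. dist (A m i) (A n i) < r"
    proof (intro exI allI impI)
      fix m n assume "M \<le> m" "M \<le> n"
      then have "norm (w m - w n) < r/2" using M by (simp add: dist_norm)
      then show "dist (A m i) (A n i) < r" using cb[where k=m and l=n and i=i] by (simp add: dist_real_def)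
    qed
  qed
  then have "convergent (\<lambda>k. A k i)" for i by (simp add: Cauchy_convergent_iff)
  then obtain c where c: "\<And>i. (\<lambda>k. A k i) \<longlonglongrightarrow> c i" unfolding convergent_def by metis
  have Pl: "(\<lambda>k. \<Sum>i<n. A k i *\<^sub>R e i) \<longlonglongrightarrow> (\<Sum>i<n. c i *\<^sub>R e i)" for n
    by (intro tendsto_sum tendsto_scaleR c tendsto_const)
  have key: "norm ((\<Sum>i<n. A k i *\<^sub>R e i) - (\<Sum>i<n. c i *\<^sub>R e i)) \<le> norm (w k - y)" for k n
  proof (rule tendsto_le[OF trivial_limit_sequentially])
    show "(\<lambda>l. norm (w k - w l)) \<longlonglongrightarrow> norm (w k - y)"
      by (intro tendsto_norm tendsto_diff tendsto_const w(2))
    show "(\<lambda>l. norm ((\<Sum>i<n. A k i *\<^sub>R e i) - (\<Sum>i<n. A l i *\<^sub>R e i))) \<longlonglongrightarrow>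
        norm ((\<Sum>i<n. A k i *\<^sub>R e i) - (\<Sum>i<n. c i *\<^sub>R e i))"
      by (intro tendsto_norm tendsto_diff tendsto_const Pl)
    show "\<forall>\<^sub>F l in sequentially. norm ((\<Sum>i<n. A k i *\<^sub>R e i) - (\<Sum>i<n. A l i *\<^sub>R e i)) \<le> norm (w k - w l)"
      using pb by simp
  qed
  have "(\<lambda>n. \<Sum>i<n. c i *\<^sub>R e i) \<longlonglongrightarrow> y"
    unfolding LIMSEQ_iff
  proof (intro allI impI)
    fix r :: real assume r: "r > 0"
    then obtain k where k: "norm (w k - y) < r / 2"
      using w(2) unfolding LIMSEQ_iff by (metis half_gt_zero order_refl)
    show "\<exists>no. \<forall>n\<ge>no. norm ((\<Sum>i<n. c i *\<^sub>R e i) - y) < r"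
    proof (intro exI allI impI)
      fix n assume n: "NN k \<le> n"
      have wk: "(\<Sum>i<n. A k i *\<^sub>R e i) = w k" using pad[OF A(1)[of k] n] A(2)[of k] by simp
      have "norm ((\<Sum>i<n. c i *\<^sub>R e i) - y) \<le> norm ((\<Sum>i<n. c i *\<^sub>R e i) - w k) + norm (w k - y)"
        by (rule norm_diff_triangle_le[of _ "w k"]) simp_all
      also have "norm ((\<Sum>i<n. c i *\<^sub>R e i) - w k) = norm (w k - (\<Sum>i<n. c i *\<^sub>R e i))"
        by (rule norm_minus_commute)
      also have "\<dots> \<le> norm (w k - y)" using key[of k n] wk by simp
      finally show "norm ((\<Sum>i<n. c i *\<^sub>R e i) - y) < r" using k by linarith
    qed
  qed
  then show ?thesis unfolding sums_def by blast
qed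

lemma uniq_exp:
  assumes "(\<lambda>n. c n *\<^sub>R e n) sums y" "(\<lambda>n. d n *\<^sub>R e n) sums y"
  shows "c = d"
proof -
  define g where "g i = c i - d i" for i
  have gs: "(\<lambda>n. g n *\<^sub>R e n) sums 0"
    using sums_diff[OF assms] by (simp add: g_def scaleR_diff_left)
  have z: "(\<Sum>i<n. g i *\<^sub>R e i) = 0" for n
  proof -
    have "norm (\<Sum>i<n. g i *\<^sub>R e i) \<le> 0"
    proof (rule tendsto_le[OF trivial_limit_sequentially])
      show "(\<lambda>N. norm (\<Sum>i<N. g i *\<^sub>R e i)) \<longlonglongrightarrow> 0"
        using tendsto_norm[OF gs[unfolded sums_def]] by simp
      show "(\<lambda>N. norm (\<Sum>i<n. g i *\<^sub>R e i)) \<longlonglongrightarrow> norm (\<Sum>i<n. g i *\<^sub>R e i)" by simp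
      show "\<forall>\<^sub>F N in sequentially. norm (\<Sum>i<n. g i *\<^sub>R e i) \<le> norm (\<Sum>i<N. g i *\<^sub>R e i)"
        using eventually_ge_at_top[of n] by (rule eventually_mono) (rule mono_e)
    qed
    then show ?thesis by simp
  qed
  have ge: "g n *\<^sub>R e n = 0" for n using z[of "Suc n"] z[of n] by simp
  have "g n = 0" for n using ge[of n] e_norm1[of n] by (metis norm_zero scaleR_eq_0_iff zero_neq_one)
  then show ?thesis unfolding g_def by auto
qed

lemma schauder: "schauder_basis e"
  unfolding schauder_basis_def using exist_exp uniq_exp by blast

lemma part1: "normalized e \<and> monotone_basis e"
  unfolding normalized_def monotone_basis_def using e_norm1 schauder mono_e by blast


lemma xbd: "norm (\<Sum>i\<in>{m..<n}. c i *\<^sub>R x i) \<le> norm (\<Sum>i\<in>{m..<n}. c i *\<^sub>R e i)"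
proof (cases "m < n")
  case False then show ?thesis by simp
next
  case True
  define b where "b = (\<lambda>i. if m \<le> i \<and> i < n then c i else 0)"
  have "(\<Sum>i\<in>{m..n-1}. b i *\<^sub>R x i) = (\<Sum>i\<in>{m..<n}. c i *\<^sub>R x i)"
    using True by (intro sum.cong) (auto simp: b_def)
  then have "Gv x u b [(m, n-1)] = norm (\<Sum>i\<in>{m..<n}. c i *\<^sub>R x i)"
    unfolding Gv_def Fv_def using un1 by simp
  moreover have "Gv x u b [(m, n-1)] \<le> Znorm x u b"
    by (rule Zup[of n]) (use True in \<open>auto simp: b_def ilist_def\<close>)
  ultimately show ?thesis unfolding blk b_def by simp
qed

lemma part3: "(\<lambda>i. c i *\<^sub>R e i) sums z \<Longrightarrow> summable (\<lambda>i. c i *\<^sub>R x i)"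
proof -
  assume "(\<lambda>i. c i *\<^sub>R e i) sums z"
  then have "summable (\<lambda>i. c i *\<^sub>R e i)" by (rule sums_summable)
  then have C: "\<forall>r>0. \<exists>N. \<forall>m\<ge>N. \<forall>n. norm (\<Sum>i\<in>{m..<n}. c i *\<^sub>R e i) < r"
    unfolding summable_Cauchy .
  show ?thesis unfolding summable_Cauchy
    using C xbd le_less_trans by meson
qed

definition co :: "'z \<Rightarrow> nat \<Rightarrow> real" where
  "co z = (THE c. (\<lambda>n. c n *\<^sub>R e n) sums z)"

lemma co_sums: "(\<lambda>n. co z n *\<^sub>R e n) sums z"
  unfolding co_def using theI'[of "\<lambda>c. (\<lambda>n. c n *\<^sub>R e n) sums z"] schauder
  unfolding schauder_basis_def by blast

lemma co_eq: "(\<lambda>n. c n *\<^sub>R e n) sums z \<Longrightarrow> co z = c"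
  using uniq_exp co_sums by blast

definition Q :: "'z \<Rightarrow> 'x" where
  "Q z = (\<Sum>i. co z i *\<^sub>R x i)"

lemma Q_sums: "(\<lambda>i. c i *\<^sub>R e i) sums z \<Longrightarrow> (\<lambda>i. c i *\<^sub>R x i) sums Q z"
  using part3 co_eq unfolding Q_def by (metis summable_sums)

lemma Q_add: "Q (z + w) = Q z + Q w"
proof -
  have "(\<lambda>i. (co z i + co w i) *\<^sub>R e i) sums (z + w)"
    using sums_add[OF co_sums[of z] co_sums[of w]] by (simp add: scaleR_add_left)
  from Q_sums[OF this] have "(\<lambda>i. co z i *\<^sub>R x i + co w i *\<^sub>R x i) sums Q (z + w)"
    by (simp add: scaleR_add_left)
  moreover have "(\<lambda>i. co z i *\<^sub>R x i + co w i *\<^sub>R x i) sums (Q z + Q w)"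
    by (intro sums_add Q_sums co_sums)
  ultimately show ?thesis using sums_unique2 by blast
qed

lemma Q_scale: "Q (r *\<^sub>R z) = r *\<^sub>R Q z"
proof -
  have "(\<lambda>i. (r * co z i) *\<^sub>R e i) sums (r *\<^sub>R z)"
    using sums_scaleR_right[OF co_sums[of z], of r] by simp
  from Q_sums[OF this] have "(\<lambda>i. r *\<^sub>R (co z i *\<^sub>R x i)) sums Q (r *\<^sub>R z)"
    by simp
  moreover have "(\<lambda>i. r *\<^sub>R (co z i *\<^sub>R x i)) sums (r *\<^sub>R Q z)"
    by (intro sums_scaleR_right Q_sums co_sums)
  ultimately show ?thesis using sums_unique2 by blast
qed

lemma Q_norm: "norm (Q z) \<le> norm z"
proof (rule tendsto_le[OF trivial_limit_sequentially])
  show "(\<lambda>n. norm (\<Sum>i<n. co z i *\<^sub>R e i)) \<longlonglongrightarrow> norm z"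
    using tendsto_norm[OF co_sums[of z, unfolded sums_def]] .
  show "(\<lambda>n. norm (\<Sum>i<n. co z i *\<^sub>R x i)) \<longlonglongrightarrow> norm (Q z)"
    using tendsto_norm[OF Q_sums[OF co_sums[of z], unfolded sums_def]] .
  show "\<forall>\<^sub>F n in sequentially. norm (\<Sum>i<n. co z i *\<^sub>R x i) \<le> norm (\<Sum>i<n. co z i *\<^sub>R e i)"
    using xbd[where m=0 and c="co z"] by (simp add: atLeast0LessThan)
qed

lemma Q_bl: "bounded_linear Q"
  by (rule bounded_linear_intro[of _ 1]) (use Q_add Q_scale Q_norm in auto)

lemma Q_onorm: "onorm Q \<le> 1"
  using onorm_bound[of 1 Q] Q_norm by auto

lemma Q_e: "Q (e n) = x n"
proof -
  have "(\<lambda>i. (if i = n then 1 else 0) *\<^sub>R e i) sums e n"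
  proof -
    have "(\<lambda>i. (if i = n then 1 else 0) *\<^sub>R e i) = (\<lambda>r. if r = n then e r else 0)" by (rule ext) simp
    then show ?thesis using sums_single[of n e] by simp
  qed
  from Q_sums[OF this] have "(\<lambda>i. (if i = n then 1 else 0) *\<^sub>R x i) sums Q (e n)" .
  moreover have "(\<lambda>i. (if i = n then 1 else 0) *\<^sub>R x i) sums x n"
  proof -
    have "(\<lambda>i. (if i = n then 1 else 0) *\<^sub>R x i) = (\<lambda>r. if r = n then x r else 0)" by (rule ext) simp
    then show ?thesis using sums_single[of n x] by simp
  qed
  ultimately show ?thesis using sums_unique2 by blast
qed


lemma approx:
  assumes "0 < \<eta>"
  shows "\<exists>n s. (s = 1 \<or> s = -1) \<and> norm (r - (norm r * s) *\<^sub>R x n) \<le> \<eta> * norm r"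
proof (cases "r = 0")
  case True then show ?thesis by auto
next
  case False
  define v where "v = (1 / norm r) *\<^sub>R r"
  have "v \<in> sphere 0 1" using False unfolding v_def by simp
  then have "v \<in> closure (range x \<union> range (\<lambda>n. - x n))" using x_dense by blast
  then obtain p where p: "p \<in> range x \<union> range (\<lambda>n. - x n)" "dist p v < \<eta>"
    using assms unfolding closure_approachable by blast
  have "\<exists>n s. (s = 1 \<or> s = -1) \<and> p = s *\<^sub>R x n"
  proof (cases "p \<in> range x")
    case True then show ?thesis by (metis imageE scaleR_one)
  next
    case False then have "p \<in> range (\<lambda>n. - x n)" using p(1) by blast
    then show ?thesis by (metis imageE scaleR_minus1_left)
  qed
  then obtain n s where ns: "s = 1 \<or> s = -1" "p = s *\<^sub>R x n" by blast
  have "r = norm r *\<^sub>R v" using False unfolding v_def by simp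
  then have "r - (norm r * s) *\<^sub>R x n = norm r *\<^sub>R (v - p)"
    using ns by (simp add: algebra_simps)
  then have "norm (r - (norm r * s) *\<^sub>R x n) = norm r * dist p v"
    by (simp add: dist_norm norm_minus_commute)
  also have "\<dots> \<le> \<eta> * norm r" using p(2) mult_left_mono[of "dist p v" \<eta> "norm r"] by (simp add: mult.commute)
  finally show ?thesis using ns by blast
qed

lemma lift:
  assumes h0: "0 < \<eta>" and h1: "\<eta> < 1"
  shows "\<exists>z. Q z = y \<and> norm z \<le> norm y / (1 - \<eta>)"
proof -
  obtain N S where NS: "\<And>r. (S r = 1 \<or> S r = -1) \<and> norm (r - (norm r * S r) *\<^sub>R x (N r)) \<le> \<eta> * norm r"
    using approx[OF h0] by metis
  define step where "step r = r - (norm r * S r) *\<^sub>R x (N r)" for r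
  define R where "R k = (step ^^ k) y" for k
  have RS: "R (Suc k) = R k - (norm (R k) * S (R k)) *\<^sub>R x (N (R k))" for k
    unfolding R_def step_def by simp
  have hR: "norm (R k) \<le> \<eta>^k * norm y" for k
  proof (induction k)
    case 0 then show ?case by (simp add: R_def)
  next
    case (Suc k)
    have "norm (R (Suc k)) \<le> \<eta> * norm (R k)" using NS[of "R k"] RS by simp
    also have "\<dots> \<le> \<eta> * (\<eta>^k * norm y)" using Suc h0 by (intro mult_left_mono) auto
    finally show ?case by simp
  qed
  define t where "t k = (norm (R k) * S (R k)) *\<^sub>R e (N (R k))" for k
  have nt: "norm (t k) = norm (R k)" for k
    unfolding t_def using e_norm1 NS[of "R k"] by auto
  have sg: "summable (\<lambda>k. \<eta>^k * norm y)"
    by (rule summable_mult2, rule summable_geometric) (use h0 h1 in auto)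
  have sn: "summable (\<lambda>k. norm (t k))"
    by (rule summable_comparison_test'[OF sg, of 0]) (use nt hR in auto)
  have st: "summable t" using sn by (rule summable_norm_cancel)
  define z where "z = suminf t"
  have "norm z \<le> (\<Sum>k. norm (t k))" unfolding z_def by (rule summable_norm[OF sn])
  also have "\<dots> \<le> (\<Sum>k. \<eta>^k * norm y)" by (rule suminf_le[OF _ sn sg]) (use nt hR in auto)
  also have "\<dots> = norm y / (1 - \<eta>)"
    using suminf_mult2[of "\<lambda>k. \<eta>^k" "norm y"] suminf_geometric[of \<eta>] h0 h1
      summable_geometric[of \<eta>] by (simp add: mult.commute)
  finally have nz: "norm z \<le> norm y / (1 - \<eta>)" .
  have "(\<lambda>k. Q (t k)) sums Q z"
    unfolding z_def using bounded_linear.sums[OF Q_bl summable_sums[OF st]] .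
  moreover have "Q (t k) = R k - R (Suc k)" for k
    unfolding t_def Q_scale Q_e RS by simp
  ultimately have s1: "(\<lambda>k. R k - R (Suc k)) sums Q z" by simp
  have "R \<longlonglongrightarrow> 0"
  proof (rule Lim_null_comparison)
    show "\<forall>\<^sub>F k in sequentially. norm (R k) \<le> \<eta>^k * norm y" using hR by simp
    show "(\<lambda>k. \<eta>^k * norm y) \<longlonglongrightarrow> 0"
      by (intro tendsto_mult_left_zero LIMSEQ_power_zero) (use h0 h1 in auto)
  qed
  from telescope_sums'[OF this] have "(\<lambda>k. R k - R (Suc k)) sums y" by (simp add: R_def)
  with s1 have "Q z = y" using sums_unique2 by blast
  with nz show ?thesis by blast
qed


lemma Q_surj: "surj Q"
proof -
  have "y \<in> range Q" for y using lift[of "1/2" y] by auto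
  then show ?thesis by blast
qed

lemma Q_ball: "Q ` ball 0 1 = ball 0 1"
proof
  show "Q ` ball 0 1 \<subseteq> ball 0 1" using Q_norm by (force intro: order.strict_trans1)
  show "ball 0 1 \<subseteq> Q ` ball 0 1"
  proof
    fix y :: 'x assume "y \<in> ball 0 1"
    then have y: "norm y < 1" by simp
    define \<eta> where "\<eta> = (1 - norm y) / 2"
    have n0: "0 \<le> norm y" by simp
    have h1: "0 < \<eta>" unfolding \<eta>_def using y by simp
    have m1: "-1 < norm y" using n0 by linarith
    have h2: "\<eta> < 1" unfolding \<eta>_def using m1 by simp
    note h = h1 h2
    obtain z where z: "Q z = y" "norm z \<le> norm y / (1 - \<eta>)" using lift[OF h] by blast
    have lt: "norm y < 1 - \<eta>" unfolding \<eta>_def using y by (simp add: field_simps)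
    have "norm y / (1 - \<eta>) < 1"
      using lt h by (simp add: divide_less_eq)
    then show "y \<in> Q ` ball 0 1" using z by force
  qed
qed

lemma Q_cball: "\<forall>\<epsilon>>0. cball 0 1 \<subseteq> Q ` cball 0 (1 + \<epsilon>)"
proof (intro allI impI subsetI)
  fix \<epsilon> :: real and y :: 'x assume ep: "\<epsilon> > 0" and "y \<in> cball 0 1"
  then have y: "norm y \<le> 1" by simp
  define \<eta> where "\<eta> = \<epsilon> / (1 + \<epsilon>)"
  have h: "0 < \<eta>" "\<eta> < 1" using ep unfolding \<eta>_def by auto
  obtain z where z: "Q z = y" "norm z \<le> norm y / (1 - \<eta>)" using lift[OF h] by blast
  have "1 - \<eta> = 1 / (1 + \<epsilon>)" using ep unfolding \<eta>_def by (simp add: field_simps)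
  then have "norm y / (1 - \<eta>) = norm y * (1 + \<epsilon>)" by simp
  also have "\<dots> \<le> 1 + \<epsilon>" using y ep by (simp add: mult_left_le_one_le)
  finally show "y \<in> Q ` cball 0 (1 + \<epsilon>)" using z by force
qed


lemma uproj: "n \<le> N \<Longrightarrow> norm (\<Sum>i<n. d i *\<^sub>R u i) \<le> norm (\<Sum>i<N. d i *\<^sub>R u i)"
proof -
  assume nN: "n \<le> N"
  define s where "s i = (if i < n then 1 else (-1::real))" for i
  have eq: "norm (\<Sum>i<N. (s i * d i) *\<^sub>R u i) = norm (\<Sum>i<N. d i *\<^sub>R u i)"
    using u_unc unfolding one_unconditional_basis_def s_def by auto
  have "(\<Sum>i<N. d i *\<^sub>R u i) + (\<Sum>i<N. (s i * d i) *\<^sub>R u i) = (\<Sum>i<N. (if i < n then 2 * d i else 0) *\<^sub>R u i)"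
    by (simp add: sum.distrib[symmetric] scaleR_add_left[symmetric] s_def) (rule sum.cong, auto)
  also have "\<dots> = 2 *\<^sub>R (\<Sum>i<n. d i *\<^sub>R u i)"
  proof -
    have "(\<Sum>i<N. (if i < n then 2 * d i else 0) *\<^sub>R u i) = (\<Sum>i<n. (2 * d i) *\<^sub>R u i)"
      using nN by (intro sum.mono_neutral_cong_right) auto
    then show ?thesis by (simp add: scaleR_sum_right)
  qed
  finally have eq2: "(\<Sum>i<N. d i *\<^sub>R u i) + (\<Sum>i<N. (s i * d i) *\<^sub>R u i) = 2 *\<^sub>R (\<Sum>i<n. d i *\<^sub>R u i)" .
  have "2 * norm (\<Sum>i<n. d i *\<^sub>R u i) = norm ((\<Sum>i<N. d i *\<^sub>R u i) + (\<Sum>i<N. (s i * d i) *\<^sub>R u i))"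
    unfolding eq2 by simp
  also have "\<dots> \<le> norm (\<Sum>i<N. d i *\<^sub>R u i) + norm (\<Sum>i<N. (s i * d i) *\<^sub>R u i)"
    by (rule norm_triangle_ineq)
  finally have "2 * norm (\<Sum>i<n. d i *\<^sub>R u i) \<le> norm (\<Sum>i<N. d i *\<^sub>R u i) + norm (\<Sum>i<N. (s i * d i) *\<^sub>R u i)" .
  then show ?thesis using eq by simp
qed

lemma bc_part:
  assumes bcu: "boundedly_complete u"
  shows "boundedly_complete e"
  unfolding boundedly_complete_def
proof (intro allI impI)
  fix a assume "bounded (range (\<lambda>n. \<Sum>i<n. a i *\<^sub>R e i))"
  then obtain C where C: "\<And>n. norm (\<Sum>i<n. a i *\<^sub>R e i) \<le> C" unfolding bounded_iff by auto
  show "summable (\<lambda>i. a i *\<^sub>R e i)" unfolding summable_Cauchy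
  proof (rule ccontr)
    assume "\<not> (\<forall>r>0. \<exists>N. \<forall>m\<ge>N. \<forall>n. norm (\<Sum>i\<in>{m..<n}. a i *\<^sub>R e i) < r)"
    then obtain r where r: "r > 0" "\<And>N. \<exists>m\<ge>N. \<exists>n. r \<le> norm (\<Sum>i\<in>{m..<n}. a i *\<^sub>R e i)"
      by (auto simp: not_less)
    have good: "\<exists>n Js. M < n \<and> ilist Js \<and> (\<forall>p\<in>set Js. M \<le> fst p \<and> snd p < n) \<and> r/4 < Gv x u a Js" for M
    proof -
      obtain m n where mn: "M \<le> m" "r \<le> norm (\<Sum>i\<in>{m..<n}. a i *\<^sub>R e i)" using r(2) by blast
      have mlt: "m < n"
      proof (rule ccontr)
        assume "\<not> m < n" then have "{m..<n} = {}" by auto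
        then show False using mn(2) r(1) by simp
      qed
      define b where "b = (\<lambda>i. if m \<le> i \<and> i < n then a i else 0)"
      have "r \<le> Znorm x u b" using mn(2) unfolding blk b_def .
      then have "r/2 < Znorm x u b" using r(1) by linarith
      then obtain Is where Is: "ilist Is" "r/2 < Gv x u b Is"
        using Zapprox[of n b "r/2"] unfolding b_def by auto
      obtain Js where Js: "ilist Js" "\<forall>p\<in>set Js. m \<le> fst p \<and> snd p < n" "Gv x u b Is \<le> 2 * Gv x u b Js"
        using inner_block[OF x_sphere un1, of m n b Is] Is(1) unfolding b_def by auto
      have "sum_list (map (Fv x u b) Js) = sum_list (map (Fv x u a) Js)"
        by (rule arg_cong[where f=sum_list], rule map_cong[OF refl], rule Fv_cong)
           (use Js(2) in \<open>fastforce simp: b_def\<close>)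
      then have "Gv x u b Js = Gv x u a Js" by (simp add: Gv_def)
      then have "r/4 < Gv x u a Js" using Is(2) Js(3) by linarith
      then show ?thesis using Js(1,2) mn(1) mlt by (intro exI[of _ n] exI[of _ Js]) auto
    qed
    then obtain NX JX where NJ: "\<And>M. M < NX M \<and> ilist (JX M) \<and> (\<forall>p\<in>set (JX M). M \<le> fst p \<and> snd p < NX M) \<and> r/4 < Gv x u a (JX M)"
      by metis
    define B where "B k = (NX ^^ k) 0" for k
    have BS: "B (Suc k) = NX (B k)" for k by (simp add: B_def)
    have smB: "strict_mono B" unfolding strict_mono_Suc_iff using NJ BS by simp
    have Bge: "k \<le> B k" for k using seq_suble[OF smB] .
    have Bmono: "k \<le> l \<Longrightarrow> B k \<le> B l" for k l using strict_mono_less_eq[OF smB] by simp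
    define J where "J k = JX (B k)" for k
    have Jin: "\<forall>p\<in>set (J k). B k \<le> fst p \<and> snd p < B (Suc k)" for k
      using NJ[of "B k"] BS unfolding J_def by simp
    have Jil: "ilist (J k)" for k using NJ unfolding J_def by simp
    have Jfs: "\<forall>p\<in>set (J k). fst p \<le> snd p" for k using Jil[of k] unfolding ilist_def by simp
    define c where "c p = norm (\<Sum>i\<in>{fst p..snd p}. a i *\<^sub>R x i)" for p
    have Fvc: "Fv x u a = (\<lambda>p. c p *\<^sub>R u (fst p))" by (rule ext) (simp add: Fv_def c_def)
    define V where "V k = sum_list (map (Fv x u a) (J k))" for k
    have Vg: "r/4 < norm (V k)" for k using NJ[of "B k"] unfolding V_def J_def Gv_def by simp
    define dL where "dL L i = sum_list (map (\<lambda>p. if fst p = i then c p else 0) L)" for L i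
    define d where "d i = (\<Sum>k<Suc i. dL (J k) i)" for i
    have ident: "(\<Sum>i<B K. d i *\<^sub>R u i) = (\<Sum>k<K. V k)" for K
    proof -
      have 1: "d i = (\<Sum>k<K. dL (J k) i)" if i: "i < B K" for i
      proof -
        have z: "dL (J k) i = 0" if "i < B k" for k
          unfolding dL_def by (rule dL_zero) (use Jin[of k] that in fastforce)
        have "(\<Sum>k<Suc i. dL (J k) i) = (\<Sum>k\<in>{..<Suc i} \<inter> {..<K}. dL (J k) i)"
        proof (rule sum.mono_neutral_right)
          show "\<forall>k\<in>{..<Suc i} - {..<Suc i} \<inter> {..<K}. dL (J k) i = 0"
          proof
            fix k assume "k \<in> {..<Suc i} - {..<Suc i} \<inter> {..<K}"
            then have "K \<le> k" by auto
            then have "B K \<le> B k" by (rule Bmono)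
            then have "i < B k" using i by linarith
            then show "dL (J k) i = 0" by (rule z)
          qed
        qed auto
        also have "\<dots> = (\<Sum>k<K. dL (J k) i)"
        proof (rule sum.mono_neutral_left)
          show "\<forall>k\<in>{..<K} - {..<Suc i} \<inter> {..<K}. dL (J k) i = 0"
          proof
            fix k assume "k \<in> {..<K} - {..<Suc i} \<inter> {..<K}"
            then have "i < k" by auto
            then have "i < B k" using Bge[of k] by linarith
            then show "dL (J k) i = 0" by (rule z)
          qed
        qed auto
        finally show ?thesis unfolding d_def .
      qed
      have "(\<Sum>i<B K. d i *\<^sub>R u i) = (\<Sum>i<B K. \<Sum>k<K. dL (J k) i *\<^sub>R u i)"
        by (rule sum.cong) (auto simp: 1 scaleR_sum_left)
      also have "\<dots> = (\<Sum>k<K. \<Sum>i<B K. dL (J k) i *\<^sub>R u i)" by (rule sum.swap)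
      also have "\<dots> = (\<Sum>k<K. V k)"
      proof (rule sum.cong[OF refl])
        fix k assume "k \<in> {..<K}"
        then have "B (Suc k) \<le> B K" using Bmono by simp
        then have "\<forall>p\<in>set (J k). fst p < B K" using Jin[of k] Jfs[of k] by fastforce
        then show "(\<Sum>i<B K. dL (J k) i *\<^sub>R u i) = V k"
          unfolding dL_def V_def Fvc by (rule dL_sum)
      qed
      finally show ?thesis .
    qed
    define L where "L K = concat (map J [0..<K])" for K
    have LK: "ilist (L K) \<and> (\<forall>p\<in>set (L K). snd p < B K)" for K
    proof (induction K)
      case 0 then show ?case by (simp add: L_def ilist_def)
    next
      case (Suc K)
      have LS: "L (Suc K) = L K @ J K" by (simp add: L_def)
      have "snd p < fst q" if "p \<in> set (L K)" "q \<in> set (J K)" for p q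
      proof -
        have "snd p < B K" using Suc that(1) by blast
        moreover have "B K \<le> fst q" using Jin[of K] that(2) by blast
        ultimately show ?thesis by linarith
      qed
      then have "sorted_wrt (\<lambda>p q. snd p < fst q) (L K @ J K)"
        unfolding sorted_wrt_append using Suc Jil[of K] unfolding ilist_def by blast
      moreover have "\<forall>p\<in>set (L K @ J K). fst p \<le> snd p" using Suc Jfs[of K] unfolding ilist_def by auto
      moreover have "\<forall>p\<in>set (L K @ J K). snd p < B (Suc K)"
        using Suc Jin[of K] smB unfolding strict_mono_Suc_iff by (auto intro: less_trans)
      ultimately show ?case unfolding LS ilist_def by blast
    qed
    have sumL: "sum_list (map (Fv x u a) (L K)) = (\<Sum>k<K. V k)" for K
      by (induction K) (simp_all add: L_def V_def)
    have bdK: "norm (\<Sum>k<K. V k) \<le> C" for K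
    proof -
      define t where "t = (\<lambda>i. if i < B K then a i else 0)"
      have "sum_list (map (Fv x u a) (L K)) = sum_list (map (Fv x u t) (L K))"
        by (rule arg_cong[where f=sum_list], rule map_cong[OF refl], rule Fv_cong)
           (use LK[of K] in \<open>fastforce simp: t_def\<close>)
      then have "norm (\<Sum>k<K. V k) = Gv x u t (L K)" using sumL by (simp add: Gv_def)
      also have "\<dots> \<le> Znorm x u t" by (rule Zup[of "B K"]) (use LK in \<open>auto simp: t_def\<close>)
      also have "\<dots> = norm (\<Sum>i<B K. a i *\<^sub>R e i)" unfolding trunc t_def ..
      also have "\<dots> \<le> C" by (rule C)
      finally show ?thesis .
    qed
    have bd: "norm (\<Sum>i<n. d i *\<^sub>R u i) \<le> C" for n
      using uproj[OF Bge[of n], of d] ident[of n] bdK[of n] by simp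
    have "summable (\<lambda>i. d i *\<^sub>R u i)"
      using bcu unfolding boundedly_complete_def bounded_iff using bd by blast
    then have conv: "(\<lambda>n. \<Sum>i<n. d i *\<^sub>R u i) \<longlonglongrightarrow> (\<Sum>i. d i *\<^sub>R u i)" by (rule summable_LIMSEQ)
    have c1: "(\<lambda>k. \<Sum>i<B k. d i *\<^sub>R u i) \<longlonglongrightarrow> (\<Sum>i. d i *\<^sub>R u i)"
      using LIMSEQ_subseq_LIMSEQ[OF conv smB] by (simp add: comp_def)
    have c2: "(\<lambda>k. \<Sum>i<B (Suc k). d i *\<^sub>R u i) \<longlonglongrightarrow> (\<Sum>i. d i *\<^sub>R u i)"
      using LIMSEQ_Suc[OF c1] .
    have "(\<lambda>k. (\<Sum>i<B (Suc k). d i *\<^sub>R u i) - (\<Sum>i<B k. d i *\<^sub>R u i)) \<longlonglongrightarrow> 0"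
      using tendsto_diff[OF c2 c1] by simp
    moreover have "(\<Sum>i<B (Suc k). d i *\<^sub>R u i) - (\<Sum>i<B k. d i *\<^sub>R u i) = V k" for k
      unfolding ident by simp
    ultimately have "V \<longlonglongrightarrow> 0" by simp
    then obtain k0 where "\<forall>k\<ge>k0. norm (V k - 0) < r/4" using LIMSEQ_D[of V 0 "r/4"] r(1) by auto
    then have "norm (V k0) < r/4" by simp
    then show False using Vg[of k0] by linarith
  qed
qed

end

theorem propositionA2:
  fixes x :: "nat \<Rightarrow> 'x::banach"
    and u :: "nat \<Rightarrow> 'u::banach"
    and e :: "nat \<Rightarrow> 'z::banach"
  assumes x_sphere: "\<forall>n. norm (x n) = 1"
    and x_dense: "sphere 0 1 \<subseteq> closure (range x \<union> range (\<lambda>n. - x n))"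
    and u_norm: "normalized u"
    and u_unc: "one_unconditional_basis u"
    and e_norm: "\<forall>a N. (\<forall>i\<ge>N. a i = 0) \<longrightarrow> norm (\<Sum>i<N. a i *\<^sub>R e i) = Znorm x u a"
    and e_dense: "closure (span (range e)) = UNIV"
  shows "normalized e \<and> monotone_basis e
    \<and> (boundedly_complete u \<longrightarrow> boundedly_complete e)
    \<and> (\<forall>z c. (\<lambda>i. c i *\<^sub>R e i) sums z \<longrightarrow> summable (\<lambda>i. c i *\<^sub>R x i))
    \<and> (\<exists>Q. bounded_linear Q
         \<and> (\<forall>z c. (\<lambda>i. c i *\<^sub>R e i) sums z \<longrightarrow> (\<lambda>i. c i *\<^sub>R x i) sums Q z)
         \<and> surj Q \<and> Q ` ball 0 1 = ball 0 1
         \<and> onorm Q \<le> 1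
         \<and> (\<forall>\<epsilon>>0. cball 0 1 \<subseteq> Q ` cball 0 (1 + \<epsilon>)))"
proof -
  interpret ctx x u e using assms by unfold_locales
  have A: "normalized e \<and> monotone_basis e" by (rule part1)
  have B: "boundedly_complete u \<longrightarrow> boundedly_complete e" using bc_part by blast
  have C: "\<forall>z c. (\<lambda>i. c i *\<^sub>R e i) sums z \<longrightarrow> summable (\<lambda>i. c i *\<^sub>R x i)" using part3 by blast
  have D: "bounded_linear Q
         \<and> (\<forall>z c. (\<lambda>i. c i *\<^sub>R e i) sums z \<longrightarrow> (\<lambda>i. c i *\<^sub>R x i) sums Q z)
         \<and> surj Q \<and> Q ` ball 0 1 = ball 0 1
         \<and> onorm Q \<le> 1
         \<and> (\<forall>\<epsilon>>0. cball 0 1 \<subseteq> Q ` cball 0 (1 + \<epsilon>))"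
    using Q_bl Q_sums Q_surj Q_ball Q_onorm Q_cball by (intro conjI allI impI) auto
  show ?thesis
    apply (intro conjI)
    using A apply simp
    using A apply simp
    using B apply simp
    using C apply simp
    apply (rule exI[of _ Q], rule D)
    done
qed

end
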